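(* There exists a polyhedral complex $\mathcal C$ of $\mathbb R^{n(n+1)/2}$ with support $\widetilde{K}$, such that the image by $\Phi$ of the set of matrices $A \in {\operatorname{\mathsf{TPD}}}_n(\mathbb{S}_{\max}^{\vee})$ such that all the eigenvalues of $A$ are simple and all the vectors $v^{(k)}$ are in $(\mathbb{S}_{\max}^{\vee}\setminus\{\mathbf{0}\})^n$ contains all the interiors of cells of maximal dimension of $\mathcal C$.
   Context: Here $\Gamma=\mathbb R$ and $\mathbb{S}_{\max}=\mathbb{S}_{\max}(\mathbb R)$ is the symmetrized tropical semiring, with zero $\mathbf{0}$, unit $\mathbf{1}$, minus $\ominus$, modulus $|\cdot|$ with values in $\mathbb{R}_{\max}=\mathbb R\cup\{-\infty\}$; $\mathbb{S}_{\max}^\vee$ is the set of signed elements. $A\in{\operatorname{\mathsf{TPD}}}_n(\mathbb{S}_{\max}^\vee)$: $A=(a_{ij})$ symmetric with signed entries, $\mathbf{0}<a_{ii}$ and $a_{ij}^2<a_{ii}a_{jj}$ for $i\ne j$. $\Psi(A)=(a_{ij})_{1\le i\le j\le n}$, $\mu$ applies the modulus entrywise, $\Phi=\mu\circ\Psi$, $K=\Phi({\operatorname{\mathsf{TPD}}}_n(\mathbb{S}_{\max}^\vee))$, and $\widetilde K$ is the closure in $\mathbb R^{n(n+1)/2}$ of $K\cap\mathbb R^{n(n+1)/2}=\{x: 2x_{ij}<x_{ii}+x_{jj}\ \forall i<j\}$, a convex polyhedron of dimension $n(n+1)/2$. The $\mathbb{S}_{\max}$-eigenvalues of $A$ are its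 diagonal entries $\gamma_k=a_{kk}$; after reindexing so that $\gamma_1\succeq\cdots\succeq\gamma_n$, $v^{(k)}=(\gamma_k I\ominus A)^{\mathrm{adj}}_{:,k}$. A polyhedral complex is a collection of polyhedra (cells) any two of which intersect in a common face or not at all; its support is the union of its cells. *)

theory Defs
  imports "HOL-Analysis.Analysis" "HOL-Library.Extended_Real"
begin

text \<open>Elements: the zero, signed elements (+r), (-r) and balanced elements r-bullet, r real.\<close>
datatype smax = SZero | SPos real | SNeg real | SBal real

fun smod :: "smax \<Rightarrow> ereal" where
  "smod SZero = -\<infinity>"
| "smod (SPos r) = ereal r"
| "smod (SNeg r) = ereal r"
| "smod (SBal r) = ereal r"

fun sabs :: "smax \<Rightarrow> real" where
  "sabs SZero = 0"
| "sabs (SPos r) = r"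
| "sabs (SNeg r) = r"
| "sabs (SBal r) = r"

definition sone :: smax where "sone = SPos 0"

fun sminus :: "smax \<Rightarrow> smax" where
  "sminus (SPos r) = SNeg r"
| "sminus (SNeg r) = SPos r"
| "sminus x = x"

definition splus :: "smax \<Rightarrow> smax \<Rightarrow> smax" where
  "splus a b =
     (if a = SZero then b else if b = SZero then a
      else if sabs a > sabs b then a else if sabs b > sabs a then b
      else if a = b then a else SBal (sabs a))"

fun stimes :: "smax \<Rightarrow> smax \<Rightarrow> smax" where
  "stimes SZero _ = SZero"
| "stimes _ SZero = SZero"
| "stimes (SBal r) y = SBal (r + sabs y)"
| "stimes x (SBal s) = SBal (sabs x + s)"
| "stimes (SPos r) (SPos s) = SPos (r + s)"
| "stimes (SNeg r) (SNeg s) = SPos (r + s)"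
| "stimes (SPos r) (SNeg s) = SNeg (r + s)"
| "stimes (SNeg r) (SPos s) = SNeg (r + s)"

definition is_pos :: "smax \<Rightarrow> bool" where
  "is_pos x \<longleftrightarrow> (\<exists>r. x = SPos r)"
definition is_neg :: "smax \<Rightarrow> bool" where
  "is_neg x \<longleftrightarrow> (\<exists>r. x = SNeg r)"
definition is_bal :: "smax \<Rightarrow> bool" where
  "is_bal x \<longleftrightarrow> (\<exists>r. x = SBal r)"

definition signed :: "smax \<Rightarrow> bool" where
  "signed x \<longleftrightarrow> \<not> is_bal x"

text \<open>order of S_max: a \<preceq> b iff b \<ominus> a is positive, balanced or zero; a \<prec> b iff b \<ominus> a is
  nonzero positive. On signed elements this is the usual total order.\<close>
definition sle :: "smax \<Rightarrow> smax \<Rightarrow> bool" where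
  "sle a b \<longleftrightarrow> (let d = splus b (sminus a) in d = SZero \<or> is_pos d \<or> is_bal d)"
definition slt :: "smax \<Rightarrow> smax \<Rightarrow> bool" where
  "slt a b \<longleftrightarrow> is_pos (splus b (sminus a))"

text \<open>Finite tropical sums (iterated \<oplus>), written in closed form: the result has the
  maximal modulus of the nonzero terms, and is positive/negative if all terms of
  maximal modulus are positive/negative, balanced otherwise.\<close>
definition ssum :: "('a \<Rightarrow> smax) \<Rightarrow> 'a set \<Rightarrow> smax" where
  "ssum f A =
    (let T = {x\<in>A. f x \<noteq> SZero} in
     if T = {} then SZero else
     (let M = Max (sabs ` f ` T); top = {x\<in>T. sabs (f x) = M} in
      if (\<forall>x\<in>top. is_pos (f x)) then SPos M
      else if (\<forall>x\<in>top. is_neg (f x)) then SNeg M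
      else SBal M))"

text \<open>Finite tropical products (iterated \<otimes>) over a finite set, closed form.\<close>
definition sprod :: "('a \<Rightarrow> smax) \<Rightarrow> 'a set \<Rightarrow> smax" where
  "sprod f A =
    (if (\<exists>x\<in>A. f x = SZero) then SZero
     else (let m = (\<Sum>x\<in>A. sabs (f x)) in
       if (\<exists>x\<in>A. is_bal (f x)) then SBal m
       else if even (card {x\<in>A. is_neg (f x)}) then SPos m else SNeg m))"

definition ssign :: "('n \<Rightarrow> 'n) \<Rightarrow> smax" where
  "ssign p = (if evenperm p then sone else sminus sone)"

text \<open>adjugate: adj(M)_{ij} = \<oplus>_{\<sigma>, \<sigma>(j)=i} sgn(\<sigma>) \<otimes>_{k\<noteq>j} M_{k \<sigma>(k)}
  (= (\<ominus>1)^{i+j} det of M with row j and column i removed)\<close>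
definition sadj :: "('n::finite \<Rightarrow> 'n \<Rightarrow> smax) \<Rightarrow> 'n \<Rightarrow> 'n \<Rightarrow> smax" where
  "sadj M i j = ssum (\<lambda>\<sigma>. stimes (ssign \<sigma>) (sprod (\<lambda>k. M k (\<sigma> k)) (UNIV - {j})))
                      {\<sigma>. \<sigma> permutes (UNIV::'n set) \<and> \<sigma> j = i}"

definition sshift :: "smax \<Rightarrow> ('n \<Rightarrow> 'n \<Rightarrow> smax) \<Rightarrow> 'n \<Rightarrow> 'n \<Rightarrow> smax" where
  "sshift \<gamma> A = (\<lambda>i j. splus (stimes \<gamma> (if i = j then sone else SZero)) (sminus (A i j)))"

definition TPD :: "('n \<Rightarrow> 'n \<Rightarrow> smax) set" where
  "TPD = {A. (\<forall>i j. A i j = A j i) \<and> (\<forall>i j. signed (A i j)) \<and>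
             (\<forall>i. slt SZero (A i i)) \<and>
             (\<forall>i j. i \<noteq> j \<longrightarrow> slt (stimes (A i j) (A i j)) (stimes (A i i) (A j j)))}"

section \<open>Index set {(i,j). i \<le> j}, so that R^{n(n+1)/2} = real^('n utri)\<close>

typedef (overloaded) ('n::linorder) utri = "{(i::'n, j). i \<le> j}"
  morphisms utri_rep Abs_utri by auto

instance utri :: ("{finite,linorder}") finite
proof
  have "(UNIV :: 'a utri set) = Abs_utri ` {(i::'a, j). i \<le> j}"
    using type_definition.univ[OF type_definition_utri] by simp
  moreover have "finite {(i::'a, j). i \<le> j}"
    by (rule finite_subset[of _ UNIV]) auto
  ultimately show "finite (UNIV :: 'a utri set)" by (metis finite_imageI)
qed

definition Phi :: "('n::linorder \<Rightarrow> 'n \<Rightarrow> smax) \<Rightarrow> 'n utri \<Rightarrow> ereal" where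
  "Phi A p = smod (A (fst (utri_rep p)) (snd (utri_rep p)))"

definition to_rmax :: "real ^ ('n::{finite,linorder} utri) \<Rightarrow> 'n utri \<Rightarrow> ereal" where
  "to_rmax x = (\<lambda>p. ereal (x $ p))"

definition Ktilde :: "(real ^ ('n::{finite,linorder} utri)) set" where
  "Ktilde = closure {x. to_rmax x \<in> Phi ` (TPD :: ('n \<Rightarrow> 'n \<Rightarrow> smax) set)}"

definition polyhedral_complex :: "('a::euclidean_space) set set \<Rightarrow> bool" where
  "polyhedral_complex C \<longleftrightarrow> finite C \<and> (\<forall>c\<in>C. polyhedron c) \<and>
     (\<forall>c\<in>C. \<forall>d\<in>C. c \<inter> d = {} \<or> (c \<inter> d face_of c \<and> c \<inter> d face_of d))"

text \<open>A reindexing (permutation similarity) sorting the diagonal (= eigenvalues)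
  nonincreasingly; then v^(k) = column k of adj(\<gamma>_k I \<ominus> A).\<close>
definition good_eigvecs :: "('n::{finite,linorder} \<Rightarrow> 'n \<Rightarrow> smax) \<Rightarrow> bool" where
  "good_eigvecs A \<longleftrightarrow>
     (\<exists>\<sigma>. \<sigma> permutes (UNIV::'n set) \<and>
        (let B = (\<lambda>i j. A (\<sigma> i) (\<sigma> j)) in
          (\<forall>i j. i \<le> j \<longrightarrow> sle (B j j) (B i i)) \<and>
          (\<forall>k i. signed (sadj (sshift (B k k) B) i k) \<and> sadj (sshift (B k k) B) i k \<noteq> SZero)))"

definition simple_eigenvalues :: "('n \<Rightarrow> 'n \<Rightarrow> smax) \<Rightarrow> bool" where
  "simple_eigenvalues A \<longleftrightarrow> inj (\<lambda>i. A i i)"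

end

theory Submission
  imports Defs
begin

definition edge :: "('n \<Rightarrow> 'n) \<Rightarrow> 'n \<Rightarrow> 'n \<Rightarrow> 'n \<Rightarrow> bool" where
  "edge s k u v \<longleftrightarrow> (\<exists>l. l \<noteq> k \<and> s l \<noteq> l \<and> {l, s l} = {u, v})"

lemma fixed_iff_noedge:
  assumes "inj s" "l \<noteq> k"
  shows "s l \<noteq> l \<longleftrightarrow> (\<exists>v. v \<noteq> l \<and> edge s k l v)"
proof
  assume "s l \<noteq> l" then show "\<exists>v. v \<noteq> l \<and> edge s k l v"
  proof -
    have "edge s k l (s l)" unfolding edge_def using assms \<open>s l \<noteq> l\<close> by blast
    then show ?thesis using \<open>s l \<noteq> l\<close> by metis
  qed
next
  assume "\<exists>v. v \<noteq> l \<and> edge s k l v"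
  then obtain v l' where "v \<noteq> l" "l' \<noteq> k" "s l' \<noteq> l'" "{l', s l'} = {l, v}" by (auto simp: edge_def)
  then show "s l \<noteq> l" using assms(1) by (metis doubleton_eq_iff injD)
qed

lemma funpow_cancel:
  assumes "inj t" "(t ^^ (b + c)) x = (t ^^ b) x"
  shows "(t ^^ c) x = x"
proof -
  have "(t ^^ b) ((t ^^ c) x) = (t ^^ b) x" using assms(2)
    by (metis add.commute comp_apply funpow_add)
  then show ?thesis using inj_fn[OF assms(1), of b] by (auto dest: injD)
qed

lemma two_cycle_orbit:
  assumes "t (t i) = i"
  shows "(t ^^ j) i \<in> {i, t i}"
  by (induction j) (use assms in auto)

lemma lemmaB:
  fixes s t :: "'n \<Rightarrow> 'n"
  assumes ps: "inj s" and pt: "inj t" and sk: "s k = i" and tk: "t k = i"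
    and paths: "\<And>l. l \<notin> range (\<lambda>m. (s ^^ m) i) \<Longrightarrow> s l = l"
    and kin: "k \<in> range (\<lambda>m. (s ^^ m) i)"
    and edges: "\<And>u v. u \<noteq> v \<Longrightarrow> edge s k u v \<longleftrightarrow> edge t k u v"
  shows "s = t"
proof -
  have fixeq: "s l = l \<longleftrightarrow> t l = l" if "l \<noteq> k" for l
    using fixed_iff_noedge[OF ps that] fixed_iff_noedge[OF pt that] edges by metis
  define p where "p m = (s ^^ m) i" for m
  have orb: "s (p m) = t (p m)" for m
  proof (induction m rule: less_induct)
    case (less m)
    have tp: "(t ^^ j) i = p j" if "j \<le> m" for j
      using that
    proof (induction j)
      case 0 then show ?case by (simp add: p_def)
    next
      case (Suc j)
      then have "(t ^^ Suc j) i = t (p j)" by simp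
      also have "\<dots> = s (p j)" using less.IH[of j] Suc.prems by simp
      finally show ?case by (simp add: p_def)
    qed
    define u where "u = p m"
    show ?case
    proof (cases "u = k \<or> s u = u")
      case True
      then show ?thesis
      proof
        assume "u = k" then show ?thesis using sk tk u_def by simp
      next
        assume "s u = u"
        moreover have "u \<noteq> k \<Longrightarrow> t u = u" using fixeq \<open>s u = u\<close> by blast
        ultimately show ?thesis using sk tk u_def by (cases "u = k") auto
      qed
    next
      case False
      then have uk: "u \<noteq> k" and su: "s u \<noteq> u" by auto
      then have tu: "t u \<noteq> u" using fixeq by auto
      have "edge t k u (t u)" using uk tu by (auto simp: edge_def)
      then have "edge s k u (t u)" using edges tu by metis
      then obtain l where l: "l \<noteq> k" "s l \<noteq> l" "{l, s l} = {u, t u}" by (auto simp: edge_def)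
      show ?thesis
      proof (cases "l = u")
        case True then show ?thesis using l u_def tu by (auto simp: doubleton_eq_iff)
      next
        case False
        then have lt: "l = t u" and slu: "s l = u" using l by (auto simp: doubleton_eq_iff)
        show ?thesis
        proof (cases m)
          case 0
          then have "u = i" by (simp add: u_def p_def)
          then have "l = k" using slu sk ps by (auto dest: injD)
          then show ?thesis using l by simp
        next
          case (Suc m')
          have "u = s (p m')" by (simp add: u_def p_def Suc)
          then have "l = p m'" using slu ps by (auto dest: injD)
          have "(t ^^ (m' + 2)) i = t ((t ^^ m) i)" by (simp add: Suc)
          also have "\<dots> = t u" using tp[of m] by (simp add: u_def)
          also have "\<dots> = (t ^^ m') i" using tp[of m'] lt \<open>l = p m'\<close> Suc by simp
          finally have "(t ^^ 2) i = i" using funpow_cancel[OF pt] by metis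
          then have tti: "t (t i) = i" by (simp add: numeral_2_eq_2)
          then have "t i = k" using tk pt by (auto dest: injD)
          have "u \<in> {i, t i}" using two_cycle_orbit[of t i m, OF tti] tp[of m] u_def by simp
          then have "u = i" using uk \<open>t i = k\<close> by auto
          then have "l = k" using lt \<open>t i = k\<close> by simp
          then show ?thesis using l by simp
        qed
      qed
    qed
  qed
  show ?thesis
  proof
    fix l
    show "s l = t l"
    proof (cases "l \<in> range (\<lambda>m. (s ^^ m) i)")
      case True then show ?thesis using orb by (auto simp: p_def)
    next
      case False
      then have "s l = l" "l \<noteq> k" using paths kin by auto
      then show ?thesis using fixeq by auto
    qed
  qed
qed

definition mw :: "('n \<Rightarrow> 'n \<Rightarrow> real) \<Rightarrow> 'n \<Rightarrow> 'n \<Rightarrow> 'n \<Rightarrow> real" where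
  "mw y k l j = (if l = j then max (y k k) (y l l) else y l j)"

definition Wt :: "('n \<Rightarrow> 'n \<Rightarrow> real) \<Rightarrow> 'n \<Rightarrow> ('n \<Rightarrow> 'n) \<Rightarrow> real" where
  "Wt y k s = (\<Sum>l\<in>UNIV-{k}. mw y k l (s l))"

lemma orbit_props:
  fixes s :: "'n::finite \<Rightarrow> 'n"
  assumes ps: "s permutes UNIV" and sk: "s k = i"
  shows "s ` range (\<lambda>m. (s ^^ m) i) = range (\<lambda>m. (s ^^ m) i)"
    and "k \<in> range (\<lambda>m. (s ^^ m) i)"
proof -
  let ?Orb = "range (\<lambda>m. (s ^^ m) i)"
  have inj: "inj s" using ps permutes_inj by blast
  have sub: "s ` ?Orb \<subseteq> ?Orb"
    by clarsimp (metis comp_apply funpow.simps(2) rangeI)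
  have "card (s ` ?Orb) = card ?Orb" using inj by (simp add: card_image inj_on_subset)
  then show eq: "s ` ?Orb = ?Orb" using sub by (simp add: card_subset_eq)
  have "i \<in> ?Orb" by (metis funpow_0 rangeI)
  then obtain w where "w \<in> ?Orb" "s w = i" using eq by (metis imageE)
  then show "k \<in> ?Orb" using sk inj by (metis injD)
qed

lemma lemmaA:
  fixes s :: "'n::finite \<Rightarrow> 'n" and y :: "'n \<Rightarrow> 'n \<Rightarrow> real"
  assumes ps: "s permutes UNIV" and sk: "s k = i"
    and tpd: "\<And>a b. a \<noteq> b \<Longrightarrow> 2 * y a b < y a a + y b b"
    and maxi: "\<And>r. r permutes UNIV \<Longrightarrow> r k = i \<Longrightarrow> Wt y k r \<le> Wt y k s"
  shows "\<And>l. l \<notin> range (\<lambda>m. (s ^^ m) i) \<Longrightarrow> s l = l"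
proof (rule ccontr)
  fix l0 assume l0: "l0 \<notin> range (\<lambda>m. (s ^^ m) i)" and nf: "s l0 \<noteq> l0"
  define Orb where "Orb = range (\<lambda>m. (s ^^ m) i)"
  define C where "C = - Orb"
  have inj: "inj s" and bij: "bij s" using ps permutes_inj permutes_bij by blast+
  have sO: "s ` Orb = Orb" and kO: "k \<in> Orb" using orbit_props[OF ps sk] Orb_def by auto
  have sC: "s ` C = C" unfolding C_def using bij_image_Compl_eq[OF bij] sO by simp
  define r where "r l = (if l \<in> Orb then s l else l)" for l
  have injr: "inj r"
  proof (rule injI)
    fix a b assume "r a = r b"
    then show "a = b" unfolding r_def using sO inj
      by (auto split: if_splits dest: injD)
  qed
  then have pr: "r permutes UNIV"
    by (intro bij_imp_permutes) (auto simp: bij_betw_def finite_UNIV_inj_surj)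
  have rk: "r k = i" using kO sk r_def by simp
  have l0C: "l0 \<in> C" using l0 C_def Orb_def by simp
  have kC: "k \<notin> C" using kO C_def by simp
  have split: "UNIV - {k} = (Orb - {k}) \<union> C" "(Orb - {k}) \<inter> C = {}" using C_def kO by auto
  have Ws: "Wt y k s = (\<Sum>l\<in>Orb-{k}. mw y k l (s l)) + (\<Sum>l\<in>C. mw y k l (s l))"
    unfolding Wt_def split(1) by (rule sum.union_disjoint) (use split(2) in auto)
  have Wr: "Wt y k r = (\<Sum>l\<in>Orb-{k}. mw y k l (s l)) + (\<Sum>l\<in>C. mw y k l l)"
    unfolding Wt_def split(1)
    by (subst sum.union_disjoint) (use split(2) in \<open>auto simp: r_def C_def intro!: sum.cong\<close>)
  have pt: "2 * mw y k l (s l) \<le> mw y k l l + mw y k (s l) (s l)" for l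
    using tpd[of l "s l"] by (cases "s l = l") (auto simp: mw_def)
  have pt0: "2 * mw y k l0 (s l0) < mw y k l0 l0 + mw y k (s l0) (s l0)"
    using tpd[of l0 "s l0"] nf by (auto simp: mw_def)
  have "(\<Sum>l\<in>C. 2 * mw y k l (s l)) < (\<Sum>l\<in>C. mw y k l l + mw y k (s l) (s l))"
    by (rule sum_strict_mono_ex1) (use pt pt0 l0C in auto)
  also have "\<dots> = (\<Sum>l\<in>C. mw y k l l) + (\<Sum>l\<in>C. mw y k (s l) (s l))"
    by (simp add: sum.distrib)
  also have "(\<Sum>l\<in>C. mw y k (s l) (s l)) = (\<Sum>l\<in>s ` C. mw y k l l)"
    by (rule sum.reindex[symmetric, unfolded comp_def]) (use inj in \<open>auto intro: inj_on_subset\<close>)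
  also have "\<dots> = (\<Sum>l\<in>C. mw y k l l)" using sC by simp
  finally have "(\<Sum>l\<in>C. mw y k l (s l)) < (\<Sum>l\<in>C. mw y k l l)"
    by (simp add: sum_distrib_left[symmetric])
  then have "Wt y k s < Wt y k r" using Ws Wr by simp
  then show False using maxi[OF pr rk] by simp
qed

definition mkB :: "('n \<Rightarrow> 'n \<Rightarrow> real) \<Rightarrow> 'n \<Rightarrow> 'n \<Rightarrow> smax" where
  "mkB y = (\<lambda>i j. if i = j then SPos (y i i) else SNeg (y i j))"

definition Ysum :: "('n \<Rightarrow> 'n \<Rightarrow> real) \<Rightarrow> ('n \<Rightarrow> bool) \<Rightarrow> 'n \<Rightarrow> ('n \<Rightarrow> 'n) \<Rightarrow> real" where
  "Ysum y g k s = (\<Sum>l\<in>UNIV-{k}. if s l = l then (if g l then y k k else y l l) else y l (s l))"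

definition generic :: "('n \<Rightarrow> 'n \<Rightarrow> real) \<Rightarrow> bool" where
  "generic y \<longleftrightarrow> (\<forall>k g s t. Ysum y g k s = Ysum y g k t \<longrightarrow>
      (\<forall>u v. u \<noteq> v \<longrightarrow> (edge s k u v \<longleftrightarrow> edge t k u v)))"

lemma shift_entry:
  assumes "l \<noteq> k" "y l l \<noteq> y k k"
  shows "sshift (mkB y k k) (mkB y) l j \<noteq> SZero \<and> \<not> is_bal (sshift (mkB y k k) (mkB y) l j)
     \<and> sabs (sshift (mkB y k k) (mkB y) l j) = mw y k l j"
  using assms
  by (cases "l = j"; cases "y k k < y l l")
     (auto simp: sshift_def mkB_def sone_def splus_def mw_def is_bal_def)

lemma term_form:
  fixes y :: "'n::finite \<Rightarrow> 'n \<Rightarrow> real"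
  assumes dist: "\<And>l. l \<noteq> k \<Longrightarrow> y l l \<noteq> y k k"
  shows "stimes (ssign s) (sprod (\<lambda>l. sshift (mkB y k k) (mkB y) l (s l)) (UNIV - {k}))
         \<in> {SPos (Wt y k s), SNeg (Wt y k s)}"
proof -
  let ?M = "sshift (mkB y k k) (mkB y)"
  have ent: "?M l j \<noteq> SZero \<and> \<not> is_bal (?M l j) \<and> sabs (?M l j) = mw y k l j" if "l \<noteq> k" for l j
    using shift_entry[of l k y j] dist[OF that] that by simp
  have nz: "\<not> (\<exists>l\<in>UNIV-{k}. ?M l (s l) = SZero)" using ent by simp
  have nb: "\<not> (\<exists>l\<in>UNIV-{k}. is_bal (?M l (s l)))" using ent by simp
  have sm: "(\<Sum>l\<in>UNIV-{k}. sabs (?M l (s l))) = Wt y k s"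
    unfolding Wt_def using ent by (intro sum.cong) auto
  show ?thesis
    unfolding sprod_def using nz nb sm
    by (auto simp: Let_def ssign_def sone_def)
qed

lemma Ysum_Wt:
  "Ysum y (\<lambda>l. y k k > y l l) k s = Wt y k s"
  unfolding Ysum_def Wt_def mw_def by (intro sum.cong) auto

lemma main_adj:
  fixes y :: "'n::finite \<Rightarrow> 'n \<Rightarrow> real"
  assumes tpd: "\<And>a b. a \<noteq> b \<Longrightarrow> 2 * y a b < y a a + y b b"
    and injd: "inj (\<lambda>a. y a a)"
    and gen: "generic y"
  shows "signed (sadj (sshift (mkB y k k) (mkB y)) i k) \<and> sadj (sshift (mkB y k k) (mkB y)) i k \<noteq> SZero"
proof -
  let ?M = "sshift (mkB y k k) (mkB y)"
  define trm where "trm s = stimes (ssign s) (sprod (\<lambda>l. ?M l (s l)) (UNIV - {k}))" for s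
  define S where "S = {s. s permutes (UNIV::'n set) \<and> s k = i}"
  have dist: "\<And>l. l \<noteq> k \<Longrightarrow> y l l \<noteq> y k k" using injd by (auto dest: injD)
  have tf: "trm s \<in> {SPos (Wt y k s), SNeg (Wt y k s)}" for s
    unfolding trm_def by (rule term_form[of k y s, OF dist])
  have nzt: "trm s \<noteq> SZero" for s using tf[of s] by auto
  have sabt: "sabs (trm s) = Wt y k s" for s using tf[of s] by auto
  have finS: "finite S" by simp
  have neS: "S \<noteq> {}" unfolding S_def
    using permutes_swap_id[of k UNIV i] by (auto intro!: exI[of _ "Transposition.transpose k i"])
  define Mx where "Mx = Max (sabs ` trm ` S)"
  define top where "top = {x\<in>S. sabs (trm x) = Mx}"
  have maxi: "Wt y k r \<le> Wt y k s" if "s \<in> top" "r permutes UNIV" "r k = i" for s r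
  proof -
    have "r \<in> S" using that S_def by simp
    then have "sabs (trm r) \<le> Mx" unfolding Mx_def using finS by (intro Max_ge) auto
    then show ?thesis using that(1) top_def sabt by simp
  qed
  have uniq: "s = t" if "s \<in> top" "t \<in> top" for s t
  proof -
    have ps: "s permutes UNIV" "s k = i" and pt: "t permutes UNIV" "t k = i"
      using that top_def S_def by auto
    have "Wt y k s = Wt y k t" using that top_def sabt by simp
    then have "Ysum y (\<lambda>l. y k k > y l l) k s = Ysum y (\<lambda>l. y k k > y l l) k t"
      by (simp add: Ysum_Wt)
    then have edges: "\<And>u v. u \<noteq> v \<Longrightarrow> edge s k u v \<longleftrightarrow> edge t k u v"
      using gen unfolding generic_def by blast
    have path: "\<And>l. l \<notin> range (\<lambda>m. (s ^^ m) i) \<Longrightarrow> s l = l"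
      by (rule lemmaA[OF ps tpd]) (use maxi that(1) in auto)
    show ?thesis
      by (rule lemmaB[OF _ _ ps(2) pt(2) path orbit_props(2)[OF ps] edges])
         (use ps pt permutes_inj in auto)
  qed
  have signs: "(\<forall>x\<in>top. is_pos (trm x)) \<or> (\<forall>x\<in>top. is_neg (trm x))"
  proof (cases "top = {}")
    case False
    then obtain s0 where "s0 \<in> top" by auto
    then have "top = {s0}" using uniq by auto
    then show ?thesis using tf[of s0] by (auto simp: is_pos_def is_neg_def)
  qed simp
  have T: "{x\<in>S. trm x \<noteq> SZero} = S" using nzt by auto
  have "sadj ?M i k = ssum trm S"
    unfolding sadj_def trm_def S_def by simp
  also have "\<dots> \<in> {SPos Mx, SNeg Mx}"
    unfolding ssum_def T Let_def using neS signs
    by (auto simp: Mx_def[symmetric] top_def[symmetric])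
  finally show ?thesis by (auto simp: signed_def is_bal_def)
qed

definition P :: "'n::linorder \<Rightarrow> 'n \<Rightarrow> 'n utri" where
  "P i j = Abs_utri (min i j, max i j)"

lemma rep_P: "utri_rep (P i j) = (min i j, max i j)"
  unfolding P_def by (rule Abs_utri_inverse) (simp, meson max.cobounded1 min.cobounded1 order_trans)

lemma P_sym: "P i j = P j i"
  unfolding P_def by (simp add: min.commute max.commute)

lemma P_eq_iff: "P i j = P u v \<longleftrightarrow> {i, j} = {u, v}"
proof -
  have "P i j = P u v \<longleftrightarrow> utri_rep (P i j) = utri_rep (P u v)"
    by (simp add: utri_rep_inject)
  also have "\<dots> \<longleftrightarrow> (min i j, max i j) = (min u v, max u v)"
    by (simp add: rep_P)
  also have "\<dots> \<longleftrightarrow> {i, j} = {u, v}"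
    by (cases "i \<le> j"; cases "u \<le> v") (auto simp: min_def max_def doubleton_eq_iff)
  finally show ?thesis .
qed

lemma P_rep: "P (fst (utri_rep p)) (snd (utri_rep p)) = p"
proof -
  obtain i j where ij: "utri_rep p = (i, j)" "i \<le> j" using utri_rep[of p] by auto
  then have "P i j = Abs_utri (utri_rep p)" unfolding P_def by (simp add: min_def max_def)
  then show ?thesis using ij utri_rep_inverse[of p] by simp
qed

definition mkA :: "real ^ ('n::{finite,linorder} utri) \<Rightarrow> 'n \<Rightarrow> 'n \<Rightarrow> smax" where
  "mkA x = (\<lambda>i j. if i = j then SPos (x $ P i i) else SNeg (x $ P i j))"

definition Sstrict :: "(real ^ ('n::{finite,linorder} utri)) set" where
  "Sstrict = {x. \<forall>i j. i \<noteq> j \<longrightarrow> 2 * x $ P i j < x $ P i i + x $ P j j}"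

definition Sle :: "(real ^ ('n::{finite,linorder} utri)) set" where
  "Sle = {x. \<forall>i j. i \<noteq> j \<longrightarrow> 2 * x $ P i j \<le> x $ P i i + x $ P j j}"

lemma slt_SPos: "slt (SPos a) (SPos b) \<longleftrightarrow> a < b"
  by (auto simp: slt_def splus_def is_pos_def)

lemma sle_SPos: "sle (SPos a) (SPos b) \<longleftrightarrow> a \<le> b"
  by (auto simp: sle_def splus_def is_pos_def is_bal_def Let_def)

lemma mkA_TPD: "x \<in> Sstrict \<Longrightarrow> mkA x \<in> TPD"
  unfolding TPD_def mkA_def Sstrict_def
  by (auto simp: P_sym signed_def is_bal_def slt_def splus_def is_pos_def)

lemma Phi_mkA:
  fixes x :: "real ^ ('n::{finite,linorder} utri)"
  shows "Phi (mkA x) = to_rmax x"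
proof
  fix p :: "'n utri"
  obtain i j where ij: "utri_rep p = (i, j)" "i \<le> j" using utri_rep[of p] by auto
  have "P i j = p" using P_rep[of p] ij by simp
  then show "Phi (mkA x) p = to_rmax x p"
    unfolding Phi_def to_rmax_def mkA_def using ij by auto
qed

lemma smod_signed: "smod a = ereal r \<Longrightarrow> signed a \<Longrightarrow> a = SPos r \<or> a = SNeg r"
  by (cases a) (auto simp: signed_def is_bal_def)

lemma smod_pos: "smod a = ereal r \<Longrightarrow> slt SZero a \<Longrightarrow> a = SPos r"
  by (cases a) (auto simp: slt_def splus_def is_pos_def)

lemma K1: "{x. to_rmax x \<in> Phi ` (TPD :: ('n::{finite,linorder} \<Rightarrow> 'n \<Rightarrow> smax) set)} = Sstrict"
proof
  show "Sstrict \<subseteq> {x. to_rmax x \<in> Phi ` (TPD :: ('n \<Rightarrow> 'n \<Rightarrow> smax) set)}"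
    using mkA_TPD Phi_mkA by (metis (mono_tags, lifting) image_eqI mem_Collect_eq subsetI)
next
  show "{x. to_rmax x \<in> Phi ` (TPD :: ('n \<Rightarrow> 'n \<Rightarrow> smax) set)} \<subseteq> Sstrict"
  proof (clarsimp simp: Sstrict_def)
    fix x :: "real ^ ('n utri)" and A :: "'n \<Rightarrow> 'n \<Rightarrow> smax" and i j :: 'n
    assume A: "A \<in> TPD" and xA: "to_rmax x = Phi A" and ij: "i \<noteq> j"
    have sym: "\<And>a b. A a b = A b a" and sg: "\<And>a b. signed (A a b)"
      and pos: "\<And>a. slt SZero (A a a)"
      and off: "slt (stimes (A i j) (A i j)) (stimes (A i i) (A j j))"
      using A ij unfolding TPD_def by auto
    have md: "smod (A a b) = ereal (x $ P a b)" for a b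
    proof -
      have "to_rmax x (P a b) = Phi A (P a b)" using xA by simp
      then show ?thesis unfolding to_rmax_def Phi_def rep_P
        by (cases "a \<le> b") (auto simp: min_def max_def sym)
    qed
    have "A i i = SPos (x $ P i i)" "A j j = SPos (x $ P j j)"
      using smod_pos[OF md pos] by auto
    moreover have "A i j = SPos (x $ P i j) \<or> A i j = SNeg (x $ P i j)"
      using smod_signed[OF md sg] .
    ultimately show "2 * x $ P i j < x $ P i i + x $ P j j"
      using off by (auto simp: slt_SPos)
  qed
qed

definition ev :: "'a \<Rightarrow> real ^ 'a" where "ev p = axis p 1"

lemma ev_inner: "ev p \<bullet> x = x $ p" "x \<bullet> ev p = x $ p"
  by (simp_all add: ev_def inner_axis inner_axis')

lemma ev_nth: "ev q $ p = (if p = q then 1 else 0)"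
  by (simp add: ev_def axis_def)

definition Fac :: "(real ^ ('n::{finite,linorder} utri)) set" where
  "Fac = {ev (P i i) + ev (P j j) - 2 *\<^sub>R ev (P i j) | i j. i \<noteq> j}"

lemma Fac_inner: "(ev (P i i) + ev (P j j) - 2 *\<^sub>R ev (P i j)) \<bullet> x = x $ P i i + x $ P j j - 2 * x $ P i j"
  by (simp add: inner_diff_left inner_add_left ev_inner)

lemma Sle_Fac: "Sle = {x. \<forall>a\<in>Fac. a \<bullet> x \<ge> 0}"
proof -
  have gen: "(\<forall>a\<in>{f i j | i j. i \<noteq> j}. Q a) \<longleftrightarrow> (\<forall>i j. i \<noteq> j \<longrightarrow> Q (f i j))" for f :: "'n \<Rightarrow> 'n \<Rightarrow> real ^ ('n utri)" and Q
    by blast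
  show ?thesis unfolding Sle_def Fac_def gen Fac_inner by auto
qed

lemma closed_Sle: "closed Sle"
proof -
  have eq: "Sle = (\<Inter>a\<in>Fac. {x. a \<bullet> x \<ge> 0})" unfolding Sle_Fac by auto
  have "closed (\<Inter>a\<in>Fac. {x. a \<bullet> x \<ge> 0})" by (rule closed_INT) (simp add: closed_halfspace_ge)
  then show ?thesis by (simp only: eq)
qed

lemma K2: "closure (Sstrict :: (real ^ ('n::{finite,linorder} utri)) set) = Sle"
proof
  show "closure Sstrict \<subseteq> Sle"
  proof (rule closure_minimal)
    show "Sstrict \<subseteq> Sle" by (auto simp: Sstrict_def Sle_def less_imp_le)
    show "closed Sle" by (rule closed_Sle)
  qed
next
  show "(Sle :: (real ^ ('n utri)) set) \<subseteq> closure Sstrict"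
  proof (rule subsetI)
    fix y assume y: "y \<in> (Sle :: (real ^ ('n utri)) set)"
    define x0 :: "real ^ ('n utri)" where "x0 = (\<chi> p. if fst (utri_rep p) = snd (utri_rep p) then 1 else 0)"
    have x0d: "x0 $ P i i = 1" for i by (simp add: x0_def rep_P)
    have x0o: "i \<noteq> j \<Longrightarrow> x0 $ P i j = 0" for i j by (simp add: x0_def rep_P min_def max_def)
    have "\<forall>e>0. \<exists>z\<in>Sstrict. dist z y < e"
    proof (intro allI impI)
      fix e :: real assume e: "e > 0"
      define t where "t = min 1 (e / (2 * (norm (x0 - y) + 1)))"
      have "0 < e / (2 * (norm (x0 - y) + 1))"
        using e by (intro divide_pos_pos) (auto intro: add_nonneg_pos)
      then have t0: "0 < t" "t \<le> 1" by (auto simp: t_def)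
      define z where "z = y + t *\<^sub>R (x0 - y)"
      have "z \<in> Sstrict"
        unfolding Sstrict_def
      proof (clarify)
        fix i j :: 'n assume ij: "i \<noteq> j"
        have "2 * y $ P i j \<le> y $ P i i + y $ P j j" using y ij by (auto simp: Sle_def)
        then have "(1 - t) * (2 * y $ P i j) \<le> (1 - t) * (y $ P i i + y $ P j j)"
          using t0 by (intro mult_left_mono) auto
        then show "2 * z $ P i j < z $ P i i + z $ P j j"
          using t0 x0d[of i] x0d[of j] x0o[OF ij] unfolding z_def by (simp add: algebra_simps)
      qed
      moreover have "dist z y < e"
      proof -
        have "dist z y = t * norm (x0 - y)" using t0 by (simp add: z_def dist_norm)
        also have "\<dots> \<le> e / (2 * (norm (x0 - y) + 1)) * norm (x0 - y)"
          by (intro mult_right_mono) (auto simp: t_def)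
        also have "\<dots> \<le> e / (2 * (norm (x0 - y) + 1)) * (norm (x0 - y) + 1)"
          by (intro mult_left_mono) (use e in auto)
        also have "\<dots> = e / 2"
        proof -
          have "norm (x0 - y) + 1 \<noteq> 0" by (smt (verit) norm_ge_zero)
          then show ?thesis by (simp add: field_simps)
        qed
        also have "\<dots> < e" using e by simp
        finally show ?thesis .
      qed
      ultimately show "\<exists>z\<in>Sstrict. dist z y < e" by blast
    qed
    then show "y \<in> closure Sstrict" by (simp only: closure_approachable)
  qed
qed

lemma Ktilde_Sle: "Ktilde = Sle"
  unfolding Ktilde_def K1 K2 ..

lemma sort_perm:
  fixes d :: "'n::{finite,linorder} \<Rightarrow> real"
  assumes injd: "inj d"
  shows "\<exists>p. p permutes (UNIV::'n set) \<and> (\<forall>i j. i \<le> j \<longrightarrow> d (p j) \<le> d (p i))"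
proof -
  define n where "n = CARD('n)"
  define rl where "rl i = card {j. j < i}" for i :: 'n
  define rd where "rd i = card {j. d i < d j}" for i :: 'n
  have rl_mono: "rl i < rl i'" if "i < i'" for i i'
    unfolding rl_def using that by (intro psubset_card_mono) auto
  have rd_anti: "rd i' < rd i" if "d i < d i'" for i i'
    unfolding rd_def using that by (intro psubset_card_mono) auto
  have inj_rl: "inj rl"
    by (metis injI linorder_neqE rl_mono less_irrefl)
  have inj_rd: "inj rd"
  proof (rule injI)
    fix a b assume "rd a = rd b"
    then show "a = b" using rd_anti injd by (metis injD less_irrefl linorder_neqE)
  qed
  have rl_lt: "rl i < n" for i
    unfolding rl_def n_def by (rule psubset_card_mono) auto
  have rd_lt: "rd i < n" for i
    unfolding rd_def n_def by (rule psubset_card_mono) auto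
  have bij_gen: "bij_betw f UNIV {..<n}" if "inj f" "\<And>i. f i < n" for f :: "'n \<Rightarrow> nat"
  proof -
    have "f ` UNIV \<subseteq> {..<n}" using that(2) by auto
    moreover have "card (f ` UNIV) = card {..<n}" using that(1) by (simp add: card_image n_def)
    ultimately have "f ` UNIV = {..<n}" by (simp add: card_subset_eq)
    then show ?thesis using that(1) by (simp add: bij_betw_def)
  qed
  have brl: "bij_betw rl UNIV {..<n}" by (rule bij_gen[OF inj_rl rl_lt])
  have brd: "bij_betw rd UNIV {..<n}" by (rule bij_gen[OF inj_rd rd_lt])
  define p where "p = inv_into UNIV rd \<circ> rl"
  have "bij_betw p UNIV UNIV" unfolding p_def
    by (rule bij_betw_trans[OF brl bij_betw_inv_into[OF brd]])
  then have pp: "p permutes UNIV" by (intro bij_imp_permutes) auto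
  have rdp: "rd (p i) = rl i" for i
  proof -
    have "rl i \<in> rd ` UNIV" using brd rl_lt by (auto simp: bij_betw_def)
    then show ?thesis unfolding p_def by (simp add: f_inv_into_f)
  qed
  have "d (p j) \<le> d (p i)" if "i \<le> j" for i j
  proof (rule ccontr)
    assume "\<not> d (p j) \<le> d (p i)"
    then have "rd (p j) < rd (p i)" using rd_anti by simp
    then have "rl j < rl i" using rdp by simp
    then show False using that rl_mono by (metis leD le_less)
  qed
  then show ?thesis using pp by blast
qed


definition gvec :: "('n::{finite,linorder} \<Rightarrow> 'n) \<Rightarrow> ('n \<Rightarrow> bool) \<Rightarrow> 'n \<Rightarrow> ('n \<Rightarrow> 'n) \<Rightarrow> real ^ ('n utri)" where
  "gvec q g k s = (\<Sum>l\<in>UNIV-{k}. ev (if s l = l then (if g l then P (q k) (q k) else P (q l) (q l))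
                                      else P (q l) (q (s l))))"

lemma gvec_inner:
  "x \<bullet> gvec q g k s = Ysum (\<lambda>i j. x $ P (q i) (q j)) g k s"
  unfolding gvec_def Ysum_def inner_sum_right
  by (intro sum.cong) (auto simp: ev_inner)

lemma P_diag_ne: "u \<noteq> v \<Longrightarrow> P a a \<noteq> P u v"
  by (auto simp: P_eq_iff doubleton_eq_iff)

lemma gvec_edge:
  assumes q: "inj q" and uv: "u \<noteq> v"
  shows "gvec q g k s $ P (q u) (q v) > 0 \<longleftrightarrow> edge s k u v"
proof -
  let ?idx = "\<lambda>l. if s l = l then (if g l then P (q k) (q k) else P (q l) (q l)) else P (q l) (q (s l))"
  have quv: "q u \<noteq> q v" using q uv by (auto dest: injD)
  have c: "gvec q g k s $ P (q u) (q v) = (\<Sum>l\<in>UNIV-{k}. if P (q u) (q v) = ?idx l then 1 else 0)"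
    unfolding gvec_def sum_component by (intro sum.cong) (auto simp: ev_nth)
  have idx: "P (q u) (q v) = ?idx l \<longleftrightarrow> s l \<noteq> l \<and> {l, s l} = {u, v}" for l
  proof (cases "s l = l")
    case True
    have "P (q u) (q v) \<noteq> P (q k) (q k)" "P (q u) (q v) \<noteq> P (q l) (q l)"
      by (rule not_sym, rule P_diag_ne[OF quv])+
    then show ?thesis using True by auto
  next
    case False
    have "P (q u) (q v) = P (q l) (q (s l)) \<longleftrightarrow> q ` {u, v} = q ` {l, s l}"
      by (simp add: P_eq_iff)
    also have "\<dots> \<longleftrightarrow> {u, v} = {l, s l}" by (rule inj_image_eq_iff[OF q])
    finally show ?thesis using False by auto
  qed
  have "(\<Sum>l\<in>UNIV-{k}. if P (q u) (q v) = ?idx l then 1 else 0::real) > 0 \<longleftrightarrow>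
        (\<exists>l\<in>UNIV-{k}. P (q u) (q v) = ?idx l)"
  proof
    assume "(\<Sum>l\<in>UNIV-{k}. if P (q u) (q v) = ?idx l then 1 else 0::real) > 0"
    show "\<exists>l\<in>UNIV-{k}. P (q u) (q v) = ?idx l"
    proof (rule ccontr)
      assume "\<not> (\<exists>l\<in>UNIV-{k}. P (q u) (q v) = ?idx l)"
      then have "(\<Sum>l\<in>UNIV-{k}. if P (q u) (q v) = ?idx l then 1 else 0::real) = 0"
        by (intro sum.neutral) auto
      then show False using \<open>(\<Sum>l\<in>UNIV-{k}. if P (q u) (q v) = ?idx l then 1 else 0::real) > 0\<close> by simp
    qed
  next
    assume "\<exists>l\<in>UNIV-{k}. P (q u) (q v) = ?idx l"
    then obtain l where l: "l \<in> UNIV-{k}" "P (q u) (q v) = ?idx l" by blast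
    show "(\<Sum>l\<in>UNIV-{k}. if P (q u) (q v) = ?idx l then 1 else 0::real) > 0"
      by (rule sum_pos2[where i=l]) (use l in auto)
  qed
  then show ?thesis unfolding c edge_def idx by auto
qed

definition Dg :: "(real ^ ('n::{finite,linorder} utri)) set" where
  "Dg = {ev (P i i) - ev (P j j) | i j. i \<noteq> j}"

definition Gen :: "(real ^ ('n::{finite,linorder} utri)) set" where
  "Gen = {gvec q g k s - gvec q g k t | q g k s t. gvec q g k s \<noteq> gvec q g k t}"

definition HH :: "(real ^ ('n::{finite,linorder} utri)) set" where
  "HH = Fac \<union> Dg \<union> Gen"

lemma finite_HH: "finite (HH :: (real ^ ('n::{finite,linorder} utri)) set)"
proof -
  have "Fac \<subseteq> range (\<lambda>(i::'n, j). ev (P i i) + ev (P j j) - 2 *\<^sub>R ev (P i j))"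
    unfolding Fac_def by auto
  then have 1: "finite (Fac :: (real ^ ('n utri)) set)"
    by (rule finite_subset) (rule finite_imageI, simp)
  have "Dg \<subseteq> range (\<lambda>(i::'n, j). ev (P i i) - ev (P j j))"
    unfolding Dg_def by auto
  then have 2: "finite (Dg :: (real ^ ('n utri)) set)"
    by (rule finite_subset) (rule finite_imageI, simp)
  have "(Gen :: (real ^ ('n utri)) set) \<subseteq>
      range (\<lambda>(q::'n\<Rightarrow>'n, g::'n\<Rightarrow>bool, k::'n, s::'n\<Rightarrow>'n, t::'n\<Rightarrow>'n). gvec q g k s - gvec q g k t)"
  proof
    fix a :: "real ^ ('n utri)" assume "a \<in> Gen"
    then obtain q g k s t where "a = gvec q g k s - gvec q g k t" unfolding Gen_def by blast
    then show "a \<in> range (\<lambda>(q::'n\<Rightarrow>'n, g::'n\<Rightarrow>bool, k::'n, s::'n\<Rightarrow>'n, t::'n\<Rightarrow>'n). gvec q g k s - gvec q g k t)"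
      by (intro range_eqI[where x="(q,g,k,s,t)"]) simp
  qed
  then have 3: "finite (Gen :: (real ^ ('n utri)) set)"
    by (rule finite_subset) (rule finite_imageI, simp)
  show ?thesis unfolding HH_def using 1 2 3 by simp
qed

lemma zero_notin_HH: "0 \<notin> (HH :: (real ^ ('n::{finite,linorder} utri)) set)"
proof
  assume "(0 :: real ^ ('n utri)) \<in> HH"
  then have "0 \<in> (Fac :: (real ^ ('n utri)) set) \<or> 0 \<in> (Dg :: (real ^ ('n utri)) set) \<or> 0 \<in> (Gen :: (real ^ ('n utri)) set)"
    unfolding HH_def by simp
  then show False
  proof (elim disjE)
    assume "0 \<in> (Fac :: (real ^ ('n utri)) set)"
    then obtain i j :: 'n where ij: "i \<noteq> j" and eq: "(0 :: real ^ ('n utri)) = ev (P i i) + ev (P j j) - 2 *\<^sub>R ev (P i j)"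
      unfolding Fac_def by auto
    have ne: "P j j \<noteq> P i i" "P i j \<noteq> P i i" using ij by (auto simp: P_eq_iff doubleton_eq_iff)
    have "(0 :: real ^ ('n utri)) $ P i i = (ev (P i i) + ev (P j j) - 2 *\<^sub>R ev (P i j)) $ P i i"
      using eq by (rule arg_cong)
    also have "\<dots> = 1" using ne by (simp add: ev_nth)
    finally have "(0 :: real ^ ('n utri)) $ P i i = 1" .
    then show False by simp
  next
    assume "0 \<in> (Dg :: (real ^ ('n utri)) set)"
    then obtain i j :: 'n where ij: "i \<noteq> j" and eq: "(0 :: real ^ ('n utri)) = ev (P i i) - ev (P j j)"
      unfolding Dg_def by auto
    have ne: "P j j \<noteq> P i i" using ij by (auto simp: P_eq_iff doubleton_eq_iff)
    have "(0 :: real ^ ('n utri)) $ P i i = (ev (P i i) - ev (P j j)) $ P i i"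
      using eq by (rule arg_cong)
    also have "\<dots> = 1" using ne by (simp add: ev_nth)
    finally have "(0 :: real ^ ('n utri)) $ P i i = 1" .
    then show False by simp
  next
    assume "0 \<in> (Gen :: (real ^ ('n utri)) set)"
    then obtain q g k s t where "gvec q g k s \<noteq> gvec q g k t" "(0 :: real ^ ('n utri)) = gvec q g k s - gvec q g k t"
      unfolding Gen_def by blast
    then show False by simp
  qed
qed

definition cell :: "(real ^ 'a) set \<Rightarrow> (real ^ 'a) set \<Rightarrow> (real ^ 'a) set" where
  "cell Pp Nn = {x. (\<forall>a\<in>Pp. a \<bullet> x \<ge> 0) \<and> (\<forall>a\<in>Nn. a \<bullet> x \<le> 0)}"

lemma cell_eq: "cell Pp Nn = (\<Inter>a\<in>Pp. {x. a \<bullet> x \<ge> 0}) \<inter> (\<Inter>a\<in>Nn. {x. a \<bullet> x \<le> 0})"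
  unfolding cell_def by auto

lemma polyhedron_cell: "finite Pp \<Longrightarrow> finite Nn \<Longrightarrow> polyhedron (cell Pp Nn)"
  unfolding cell_eq
  by (intro polyhedron_Int polyhedron_Inter) (auto simp: polyhedron_halfspace_ge polyhedron_halfspace_le)

lemma convex_cell: "convex (cell Pp Nn)"
  unfolding cell_eq
  by (intro convex_Int convex_INT) (auto simp: convex_halfspace_ge convex_halfspace_le)

lemma aux_comb:
  fixes u p r :: real
  assumes "0 < u" "u < 1" "(1 - u) * p + u * r = 0"
    and "(p \<le> 0 \<and> r \<le> 0) \<or> (p \<ge> 0 \<and> r \<ge> 0)"
  shows "p = 0 \<and> r = 0"
proof -
  have "(1 - u) * p = 0 \<and> u * r = 0"
    using assms by (smt (verit) mult_nonneg_nonneg mult_nonneg_nonpos)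
  then show ?thesis using assms by auto
qed

lemma face_lemma:
  fixes S :: "(real ^ 'a) set"
  assumes cS: "convex S"
    and sg: "\<And>a. a \<in> J \<Longrightarrow> (\<forall>x\<in>S. a \<bullet> x \<le> 0) \<or> (\<forall>x\<in>S. a \<bullet> x \<ge> 0)"
  shows "{x\<in>S. \<forall>a\<in>J. a \<bullet> x = 0} face_of S"
  unfolding face_of_def
proof (intro conjI ballI impI)
  show "{x\<in>S. \<forall>a\<in>J. a \<bullet> x = 0} \<subseteq> S" by auto
  have "{x\<in>S. \<forall>a\<in>J. a \<bullet> x = 0} = S \<inter> (\<Inter>a\<in>J. {x. a \<bullet> x = 0})" by auto
  then show "convex {x\<in>S. \<forall>a\<in>J. a \<bullet> x = 0}"
    using cS by (simp add: convex_Int convex_INT convex_hyperplane)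
next
  fix a0 b0 x
  assume a0: "a0 \<in> S" and b0: "b0 \<in> S" and x: "x \<in> {x\<in>S. \<forall>a\<in>J. a \<bullet> x = 0}"
    and seg: "x \<in> open_segment a0 b0"
  obtain u where u: "0 < u" "u < 1" "x = (1 - u) *\<^sub>R a0 + u *\<^sub>R b0"
    using seg by (auto simp: in_segment)
  have both: "a \<bullet> a0 = 0 \<and> a \<bullet> b0 = 0" if "a \<in> J" for a
  proof -
    have "(1 - u) * (a \<bullet> a0) + u * (a \<bullet> b0) = 0"
      using x that u(3) by (simp add: inner_add_right)
    moreover have "(a \<bullet> a0 \<le> 0 \<and> a \<bullet> b0 \<le> 0) \<or> (a \<bullet> a0 \<ge> 0 \<and> a \<bullet> b0 \<ge> 0)"
      using sg[OF that] a0 b0 by blast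
    ultimately show ?thesis using aux_comb u(1,2) by blast
  qed
  show "a0 \<in> {x\<in>S. \<forall>a\<in>J. a \<bullet> x = 0}" using a0 both by auto
  show "b0 \<in> {x\<in>S. \<forall>a\<in>J. a \<bullet> x = 0}" using b0 both by auto
qed

lemma cell_int_face:
  assumes H: "Pp \<union> Nn = H" "Pp' \<subseteq> H" "Nn' \<subseteq> H"
  shows "cell Pp Nn \<inter> cell Pp' Nn' face_of cell Pp Nn"
proof -
  let ?J = "(Pp' - Pp) \<union> (Nn' - Nn)"
  have eq: "cell Pp Nn \<inter> cell Pp' Nn' = {x\<in>cell Pp Nn. \<forall>a\<in>?J. a \<bullet> x = 0}"
  proof (intro set_eqI iffI)
    fix x assume "x \<in> cell Pp Nn \<inter> cell Pp' Nn'"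
    then show "x \<in> {x\<in>cell Pp Nn. \<forall>a\<in>?J. a \<bullet> x = 0}"
      using H unfolding cell_def by (auto intro!: order.antisym)
  next
    fix x assume x: "x \<in> {x\<in>cell Pp Nn. \<forall>a\<in>?J. a \<bullet> x = 0}"
    show "x \<in> cell Pp Nn \<inter> cell Pp' Nn'"
      using x unfolding cell_def by (auto simp: Ball_def)
  qed
  have "{x\<in>cell Pp Nn. \<forall>a\<in>?J. a \<bullet> x = 0} face_of cell Pp Nn"
  proof (rule face_lemma[OF convex_cell])
    fix a assume "a \<in> ?J"
    then show "(\<forall>x\<in>cell Pp Nn. a \<bullet> x \<le> 0) \<or> (\<forall>x\<in>cell Pp Nn. a \<bullet> x \<ge> 0)"
      using H unfolding cell_def by auto
  qed
  then show ?thesis using eq by simp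
qed

lemma interior_cell:
  assumes "0 \<notin> Pp" "0 \<notin> Nn" "x \<in> interior (cell Pp Nn)" "a \<in> Pp \<union> Nn"
  shows "a \<bullet> x \<noteq> 0"
proof (cases "a \<in> Pp")
  case True
  have "cell Pp Nn \<subseteq> {y. a \<bullet> y \<ge> 0}" using True unfolding cell_def by auto
  then have "interior (cell Pp Nn) \<subseteq> interior {y. a \<bullet> y \<ge> 0}" by (rule interior_mono)
  also have "\<dots> = {y. a \<bullet> y > 0}" using True assms(1) by (intro interior_halfspace_ge) auto
  finally have "interior (cell Pp Nn) \<subseteq> {y. a \<bullet> y > 0}" .
  then show ?thesis using assms(3) by auto
next
  case False
  then have N: "a \<in> Nn" using assms(4) by auto
  have "cell Pp Nn \<subseteq> {y. a \<bullet> y \<le> 0}" using N unfolding cell_def by auto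
  then have "interior (cell Pp Nn) \<subseteq> interior {y. a \<bullet> y \<le> 0}" by (rule interior_mono)
  also have "\<dots> = {y. a \<bullet> y < 0}" using N assms(2) by (intro interior_halfspace_le) auto
  finally have "interior (cell Pp Nn) \<subseteq> {y. a \<bullet> y < 0}" .
  then show ?thesis using assms(3) by auto
qed

lemma good_point:
  fixes x :: "real ^ ('n::{finite,linorder} utri)"
  assumes hx: "\<And>a. a \<in> HH \<Longrightarrow> a \<bullet> x \<noteq> 0" and xS: "x \<in> Sle"
  shows "\<exists>A \<in> (TPD :: ('n \<Rightarrow> 'n \<Rightarrow> smax) set).
          simple_eigenvalues A \<and> good_eigvecs A \<and> Phi A = to_rmax x"
proof -
  have strict: "x \<in> Sstrict"
    unfolding Sstrict_def
  proof (intro CollectI allI impI)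
    fix i j :: 'n assume ij: "i \<noteq> j"
    have "ev (P i i) + ev (P j j) - 2 *\<^sub>R ev (P i j) \<in> (HH :: (real ^ ('n utri)) set)"
      unfolding HH_def Fac_def using ij by blast
    then have "x $ P i i + x $ P j j - 2 * x $ P i j \<noteq> 0" using hx Fac_inner by metis
    moreover have "2 * x $ P i j \<le> x $ P i i + x $ P j j" using xS ij by (auto simp: Sle_def)
    ultimately show "2 * x $ P i j < x $ P i i + x $ P j j" by simp
  qed
  define d where "d i = x $ P i i" for i
  have injd: "inj d"
  proof (rule injI)
    fix i j assume dij: "d i = d j"
    show "i = j"
    proof (rule ccontr)
      assume ij: "i \<noteq> j"
      have "ev (P i i) - ev (P j j) \<in> (HH :: (real ^ ('n utri)) set)"
        unfolding HH_def Dg_def using ij by blast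
      then have "(ev (P i i) - ev (P j j)) \<bullet> x \<noteq> 0" using hx by blast
      then show False using dij by (simp add: d_def inner_diff_left ev_inner)
    qed
  qed
  have gen: "gvec q g k s = gvec q g k t" if "x \<bullet> gvec q g k s = x \<bullet> gvec q g k t" for q g k s t
  proof (rule ccontr)
    assume ne: "gvec q g k s \<noteq> gvec q g k t"
    then have "gvec q g k s - gvec q g k t \<in> (HH :: (real ^ ('n utri)) set)"
      unfolding HH_def Gen_def by blast
    then have "(gvec q g k s - gvec q g k t) \<bullet> x \<noteq> 0" using hx by blast
    moreover have "(gvec q g k s - gvec q g k t) \<bullet> x = x \<bullet> gvec q g k s - x \<bullet> gvec q g k t"
      by (simp add: inner_diff_left inner_diff_right inner_commute)
    ultimately show False using that by simp
  qed
  obtain p where pp: "p permutes (UNIV::'n set)" and srt: "\<And>i j. i \<le> j \<Longrightarrow> d (p j) \<le> d (p i)"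
    using sort_perm[OF injd] by blast
  have injp: "inj p" using pp permutes_inj by blast
  define y where "y i j = x $ P (p i) (p j)" for i j
  define A where "A = mkA x"
  have AT: "A \<in> TPD" unfolding A_def by (rule mkA_TPD[OF strict])
  have Aphi: "Phi A = to_rmax x" unfolding A_def by (rule Phi_mkA)
  have simple: "simple_eigenvalues A"
    unfolding simple_eigenvalues_def A_def mkA_def
    using injd by (auto simp: d_def inj_def)
  have Beq: "(\<lambda>i j. A (p i) (p j)) = mkB y"
    using injp by (auto simp: A_def mkA_def mkB_def y_def inj_eq intro!: ext)
  have tpd: "2 * y a b < y a a + y b b" if "a \<noteq> b" for a b
  proof -
    have "p a \<noteq> p b" using that injp by (auto dest: injD)
    then show ?thesis using strict by (auto simp: Sstrict_def y_def)
  qed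
  have injy: "inj (\<lambda>a. y a a)"
  proof -
    have "(\<lambda>a. y a a) = d \<circ> p" by (auto simp: y_def d_def)
    then show ?thesis using injd injp by (simp add: inj_compose)
  qed
  have genY: "generic y"
    unfolding generic_def
  proof (intro allI impI)
    fix k u v :: 'n and g :: "'n \<Rightarrow> bool" and s t :: "'n \<Rightarrow> 'n"
    assume ys: "Ysum y g k s = Ysum y g k t" and uv: "u \<noteq> v"
    have "x \<bullet> gvec p g k s = x \<bullet> gvec p g k t"
    proof -
      have yeq: "y = (\<lambda>i j. x $ P (p i) (p j))" by (intro ext) (simp add: y_def)
      show ?thesis using ys by (simp add: gvec_inner yeq)
    qed
    then have "gvec p g k s = gvec p g k t" by (rule gen)
    then show "edge s k u v \<longleftrightarrow> edge t k u v"
      using gvec_edge[OF injp uv, of g k s] gvec_edge[OF injp uv, of g k t] by simp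
  qed
  have good: "good_eigvecs A"
    unfolding good_eigvecs_def Let_def
  proof (intro exI conjI allI impI)
    show "p permutes UNIV" by (rule pp)
  next
    fix i j :: 'n assume "i \<le> j"
    then show "sle (A (p j) (p j)) (A (p i) (p i))"
      using srt by (simp add: A_def mkA_def sle_SPos d_def)
  next
    fix k i :: 'n
    show "signed (sadj (sshift (A (p k) (p k)) (\<lambda>i j. A (p i) (p j))) i k)"
      using main_adj[OF tpd injy genY, of k i] Beq by (metis (no_types, lifting))
  next
    fix k i :: 'n
    show "sadj (sshift (A (p k) (p k)) (\<lambda>i j. A (p i) (p j))) i k \<noteq> SZero"
      using main_adj[OF tpd injy genY, of k i] Beq by (metis (no_types, lifting))
  qed
  show ?thesis using AT Aphi simple good by blast
qed


theorem corollary5p24: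
  shows "\<exists>\<C> :: (real ^ ('n::{finite,linorder} utri)) set set.
    polyhedral_complex \<C> \<and> \<Union>\<C> = (Ktilde :: (real ^ ('n utri)) set) \<and>
    (\<forall>c\<in>\<C>. (\<forall>d\<in>\<C>. aff_dim d \<le> aff_dim c) \<longrightarrow>
       (\<forall>x\<in>interior c. \<exists>A \<in> (TPD :: ('n \<Rightarrow> 'n \<Rightarrow> smax) set).
          simple_eigenvalues A \<and> good_eigvecs A \<and> Phi A = to_rmax x))"
proof -
  define Cx :: "(real ^ ('n utri)) set set" where
    "Cx = {cell Pp Nn | Pp Nn. Pp \<subseteq> HH \<and> Nn \<subseteq> HH \<and> Pp \<union> Nn = HH \<and> Fac \<subseteq> Pp}"
  have finH: "finite (HH :: (real ^ ('n utri)) set)" by (rule finite_HH)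
  have fin: "finite Cx"
  proof -
    have "Cx \<subseteq> (\<lambda>(Pp, Nn). cell Pp Nn) ` (Pow HH \<times> Pow HH)"
      unfolding Cx_def by auto
    moreover have "finite ((\<lambda>(Pp, Nn). cell Pp Nn) ` (Pow HH \<times> Pow (HH :: (real ^ ('n utri)) set)))"
      using finH by simp
    ultimately show ?thesis by (rule finite_subset)
  qed
  have poly: "polyhedron c" if cC: "c \<in> Cx" for c
  proof -
    obtain Pp Nn where "c = cell Pp Nn" "Pp \<subseteq> HH" "Nn \<subseteq> HH" using cC Cx_def by auto
    then show ?thesis using finH by (metis polyhedron_cell finite_subset)
  qed
  have face: "c \<inter> d face_of c" if cC: "c \<in> Cx" and dC: "d \<in> Cx" for c d
  proof -
    obtain Pp Nn where c: "c = cell Pp Nn" "Pp \<union> Nn = HH" using cC Cx_def by auto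
    obtain Pp' Nn' where d: "d = cell Pp' Nn'" "Pp' \<subseteq> HH" "Nn' \<subseteq> HH" using dC Cx_def by auto
    show ?thesis unfolding c(1) d(1) by (rule cell_int_face[OF c(2) d(2,3)])
  qed
  have pc: "polyhedral_complex Cx"
    unfolding polyhedral_complex_def
    using fin poly face by (metis Int_commute)
  have un: "\<Union>Cx = Ktilde"
  proof
    show "\<Union>Cx \<subseteq> Ktilde"
    proof
      fix x assume "x \<in> \<Union>Cx"
      then obtain Pp Nn where "x \<in> cell Pp Nn" "Fac \<subseteq> Pp" using Cx_def by auto
      then have "x \<in> Sle" unfolding Sle_Fac cell_def by auto
      then show "x \<in> Ktilde" by (simp add: Ktilde_Sle)
    qed
  next
    show "Ktilde \<subseteq> \<Union>Cx"
    proof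
      fix x :: "real ^ ('n utri)" assume "x \<in> Ktilde"
      then have xS: "x \<in> Sle" by (simp add: Ktilde_Sle)
      define Pp where "Pp = {a\<in>HH. a \<bullet> x \<ge> 0}"
      define Nn where "Nn = {a\<in>HH. a \<bullet> x \<le> 0}"
      have "Fac \<subseteq> Pp" using xS unfolding Pp_def Sle_Fac HH_def by auto
      moreover have "Pp \<union> Nn = HH" unfolding Pp_def Nn_def by auto
      moreover have "x \<in> cell Pp Nn" unfolding cell_def Pp_def Nn_def by auto
      ultimately show "x \<in> \<Union>Cx" unfolding Cx_def Pp_def Nn_def by blast
    qed
  qed
  have good: "\<exists>A \<in> (TPD :: ('n \<Rightarrow> 'n \<Rightarrow> smax) set).
          simple_eigenvalues A \<and> good_eigvecs A \<and> Phi A = to_rmax x"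
    if cC: "c \<in> Cx" and xi: "x \<in> interior c" for c x
  proof -
    obtain Pp Nn where c: "c = cell Pp Nn" "Pp \<subseteq> HH" "Nn \<subseteq> HH" "Pp \<union> Nn = HH" "Fac \<subseteq> Pp"
      using cC Cx_def by auto
    have z: "0 \<notin> Pp" "0 \<notin> Nn" using zero_notin_HH c by auto
    have hx: "a \<bullet> x \<noteq> 0" if "a \<in> HH" for a
      using interior_cell[OF z] \<open>x \<in> interior c\<close> c that by auto
    have "x \<in> c" using xi interior_subset by blast
    then have "x \<in> Sle" using c unfolding Sle_Fac cell_def by auto
    then show ?thesis using good_point hx by blast
  qed
  show ?thesis using pc un good by blast
qed

end
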